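(* Consider binary classification on $\mathcal{X}=\{x\in\mathbb{R}^2:\|x\|\le1\}$ with $x$ uniformly distributed on $\mathcal{X}$ and hypothesis class $\mathcal{H}=\{h_w:h_w(x)=\mathrm{sgn}(x^{\top}w),\ w\in\mathbb{R}^2\}$. Let $g=h_v$ and let $h=h_w$ be sampled with $w\sim\mathcal{N}(v,\sigma^2 I)$. Then $\mathbb{E}_w[\rho(h,g)]$ is continuous and strictly increasing in $\sigma>0$.
   Context: $\rho(h_1,h_2)=\mathbb{P}_X[h_1(X)\neq h_2(X)]$ with $X$ uniform on $\mathcal{X}$. *)

theory Defs
  imports "HOL-Probability.Probability"
begin

definition X_dom :: "(real \<times> real) set" where
  "X_dom = cball 0 1"

definition hyp :: "real \<times> real \<Rightarrow> real \<times> real \<Rightarrow> real" where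
  "hyp w x = sgn (x \<bullet> w)"

definition rho :: "(real \<times> real \<Rightarrow> real) \<Rightarrow> (real \<times> real \<Rightarrow> real) \<Rightarrow> real" where
  "rho h1 h2 = measure (uniform_measure lborel X_dom) {x \<in> X_dom. h1 x \<noteq> h2 x}"

definition gauss2 :: "real \<times> real \<Rightarrow> real \<Rightarrow> (real \<times> real) measure" where
  "gauss2 v \<sigma> = density lborel
     (\<lambda>w. ennreal (normal_density (fst v) \<sigma> (fst w) * normal_density (snd v) \<sigma> (snd w)))"

definition exp_disagree :: "real \<times> real \<Rightarrow> real \<Rightarrow> real" where
  "exp_disagree v \<sigma> = (\<integral>w. rho (hyp w) (hyp v) \<partial>(gauss2 v \<sigma>))"

end

theory Submission
  imports Defs
begin

lemma X_dom_sets[measurable]: "X_dom \<in> sets borel"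
  unfolding X_dom_def by simp

lemma Q_sets: "{p::(real\<times>real)\<times>(real\<times>real). snd p \<in> X_dom \<and> sgn (snd p \<bullet> fst p) \<noteq> sgn (snd p \<bullet> v)} \<in> sets (borel \<Otimes>\<^sub>M borel)"
proof -
  have f: "(\<lambda>p::(real\<times>real)\<times>(real\<times>real). sgn (snd p \<bullet> fst p)) \<in> borel_measurable borel"
    by (rule measurable_compose[OF _ borel_measurable_sgn, where f="\<lambda>p. snd p \<bullet> fst p"]) (intro borel_measurable_continuous_onI continuous_intros)
  have g: "(\<lambda>p::(real\<times>real)\<times>(real\<times>real). sgn (snd p \<bullet> v)) \<in> borel_measurable borel"
    by (rule measurable_compose[OF _ borel_measurable_sgn, where f="\<lambda>p. snd p \<bullet> v"]) (intro borel_measurable_continuous_onI continuous_intros)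
  have s: "(snd :: (real\<times>real)\<times>(real\<times>real) \<Rightarrow> _) \<in> borel_measurable borel"
    by (intro borel_measurable_continuous_onI continuous_intros)
  have "{p::(real\<times>real)\<times>(real\<times>real). snd p \<in> X_dom \<and> sgn (snd p \<bullet> fst p) \<noteq> sgn (snd p \<bullet> v)}
     = (snd -` X_dom \<inter> space borel) \<inter> {p \<in> space borel. sgn (snd p \<bullet> fst p) \<noteq> sgn (snd p \<bullet> v)}"
    by auto
  also have "\<dots> \<in> sets borel"
    using borel_measurable_neq[OF f g] measurable_sets[OF s X_dom_sets] by blast
  finally show ?thesis unfolding borel_prod .
qed

lemma X_dom_pos: "emeasure lborel X_dom \<noteq> 0" "emeasure lborel X_dom \<noteq> \<infinity>"
proof -
  have f: "emeasure lborel X_dom < \<infinity>"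
    using emeasure_lborel_cball_finite[of "0::real\<times>real" 1] unfolding X_dom_def by simp
  have "measure lborel X_dom > 0"
    using content_cball_pos[of 1 "0::real\<times>real"] unfolding X_dom_def by simp
  moreover have "emeasure lborel X_dom = ennreal (measure lborel X_dom)"
    using f by (intro emeasure_eq_ennreal_measure) simp
  ultimately show "emeasure lborel X_dom \<noteq> 0" by simp
  show "emeasure lborel X_dom \<noteq> \<infinity>" using f by simp
qed

lemma U_prob: "prob_space (uniform_measure lborel X_dom)"
  using X_dom_pos by (rule prob_space_uniform_measure)

lemma sets_U[simp]: "sets (uniform_measure lborel X_dom) = sets borel"
  by simp

lemma R_meas[measurable]: "(\<lambda>w. rho (hyp w) (hyp v)) \<in> borel_measurable borel"
proof -
  interpret U: prob_space "uniform_measure lborel X_dom" by (rule U_prob)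
  let ?Q = "{p::(real\<times>real)\<times>(real\<times>real). snd p \<in> X_dom \<and> sgn (snd p \<bullet> fst p) \<noteq> sgn (snd p \<bullet> v)}"
  have "?Q \<in> sets (borel \<Otimes>\<^sub>M uniform_measure lborel X_dom)"
    using Q_sets[of v] sets_pair_measure_cong[OF refl sets_U] by simp
  from U.measurable_emeasure_Pair[OF this]
  have m: "(\<lambda>w. enn2real (emeasure (uniform_measure lborel X_dom) (Pair w -` ?Q))) \<in> borel_measurable borel"
    by measurable
  have eq: "Pair w -` ?Q = {x \<in> X_dom. hyp w x \<noteq> hyp v x}" for w
    by (auto simp: hyp_def)
  show ?thesis using m unfolding rho_def measure_def eq .
qed

lemma P_eq: "gauss2 0 1 = density lborel (normal_density 0 1) \<Otimes>\<^sub>M density lborel (normal_density 0 1)"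
proof -
  have "density lborel (normal_density 0 1) \<Otimes>\<^sub>M density lborel (normal_density 0 1)
     = density (lborel \<Otimes>\<^sub>M lborel) (\<lambda>(x,y). ennreal (normal_density 0 1 x) * ennreal (normal_density 0 1 y))"
  proof (rule pair_measure_density)
    show "sigma_finite_measure (density lborel (\<lambda>x. ennreal (normal_density 0 1 x)))"
    proof -
      interpret prob_space "density lborel (\<lambda>x. ennreal (normal_density 0 1 x))"
        by (rule prob_space_normal_density) simp
      show ?thesis by unfold_locales
    qed
  qed (auto intro: lborel.sigma_finite_measure_axioms)
  also have "\<dots> = gauss2 0 1"
    unfolding gauss2_def lborel_prod
    by (simp add: case_prod_beta' ennreal_mult normal_density_nonneg)
  finally show ?thesis by simp
qed

lemma P_prob: "prob_space (gauss2 0 1)"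
  unfolding P_eq by (intro prob_space_pair prob_space_normal_density) simp_all

lemma nd_scale: "s > 0 \<Longrightarrow> s * normal_density m s (m + s * x) = normal_density 0 1 x"
  unfolding normal_density_def
  by (simp add: real_sqrt_mult power_mult_distrib field_simps)

lemma nd2_meas[measurable]: "(\<lambda>w::real\<times>real. normal_density a s (fst w) * normal_density b s (snd w)) \<in> borel_measurable borel"
proof -
  have f: "(fst :: real\<times>real \<Rightarrow> real) \<in> borel_measurable borel" "(snd :: real\<times>real \<Rightarrow> real) \<in> borel_measurable borel"
    by (intro borel_measurable_continuous_onI continuous_intros)+
  show ?thesis
    using measurable_compose[OF f(1) borel_measurable_normal_density] measurable_compose[OF f(2) borel_measurable_normal_density]
    by (simp add: o_def borel_measurable_times)
qed

lemma affine_nn: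
  fixes f :: "real\<times>real \<Rightarrow> ennreal" and v :: "real\<times>real"
  assumes f[measurable]: "f \<in> borel_measurable borel" and s: "s \<noteq> 0"
  shows "(\<integral>\<^sup>+ w. f w \<partial>lborel) = (\<integral>\<^sup>+ z. ennreal (s^2) * f (v + s *\<^sub>R z) \<partial>lborel)"
proof -
  have L: "lborel = density (distr lborel borel (\<lambda>x. v + s *\<^sub>R x)) (\<lambda>_. ennreal (\<bar>s\<bar>^DIM(real\<times>real)))"
    using lborel_affine[OF s, of v] by simp
  have "(\<integral>\<^sup>+ w. f w \<partial>lborel) = (\<integral>\<^sup>+ w. f w \<partial>density (distr lborel borel (\<lambda>x. v + s *\<^sub>R x)) (\<lambda>_. ennreal (\<bar>s\<bar>^DIM(real\<times>real))))"
    by (subst L[symmetric]) (rule refl)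
  also have "\<dots> = (\<integral>\<^sup>+ w. ennreal (\<bar>s\<bar>^DIM(real\<times>real)) * f w \<partial>distr lborel borel (\<lambda>x. v + s *\<^sub>R x))"
    by (rule nn_integral_density) auto
  also have "\<dots> = (\<integral>\<^sup>+ z. ennreal (\<bar>s\<bar>^DIM(real\<times>real)) * f (v + s *\<^sub>R z) \<partial>lborel)"
    by (rule nn_integral_distr) auto
  finally show ?thesis by (simp add: power2_eq_square)
qed

lemma gauss2_affine:
  assumes s: "s > 0"
  shows "gauss2 v s = distr (gauss2 0 1) borel (\<lambda>z. v + s *\<^sub>R z)"
proof (rule measure_eqI)
  show "sets (gauss2 v s) = sets (distr (gauss2 0 1) borel (\<lambda>z. v + s *\<^sub>R z))"
    by (simp add: gauss2_def)
next
  fix A assume "A \<in> sets (gauss2 v s)"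
  then have A[measurable]: "A \<in> sets borel" by (simp add: gauss2_def)
  have T[measurable]: "(\<lambda>z::real\<times>real. v + s *\<^sub>R z) \<in> borel_measurable borel"
    by (intro borel_measurable_continuous_onI continuous_intros)
  have TA[measurable]: "(\<lambda>z. v + s *\<^sub>R z) -` A \<in> sets borel"
    using measurable_sets[OF T A] by simp
  have pw: "ennreal (s^2) * (ennreal (normal_density (fst v) s (fst (v + s *\<^sub>R z)) * normal_density (snd v) s (snd (v + s *\<^sub>R z))) * indicator A (v + s *\<^sub>R z))
     = ennreal (normal_density 0 1 (fst z) * normal_density 0 1 (snd z)) * indicator ((\<lambda>z. v + s *\<^sub>R z) -` A) z" for z
  proof -
    have "s^2 * (normal_density (fst v) s (fst (v + s *\<^sub>R z)) * normal_density (snd v) s (snd (v + s *\<^sub>R z)))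
      = (s * normal_density (fst v) s (fst v + s * fst z)) * (s * normal_density (snd v) s (snd v + s * snd z))"
      by (simp add: power2_eq_square)
    also have "\<dots> = normal_density 0 1 (fst z) * normal_density 0 1 (snd z)"
      using nd_scale[OF s] by simp
    finally have "s^2 * (normal_density (fst v) s (fst (v + s *\<^sub>R z)) * normal_density (snd v) s (snd (v + s *\<^sub>R z)))
      = normal_density 0 1 (fst z) * normal_density 0 1 (snd z)" .
    then show ?thesis
      by (simp add: ennreal_mult[symmetric] normal_density_nonneg mult.assoc[symmetric] indicator_def)
  qed
  have "emeasure (gauss2 v s) A = (\<integral>\<^sup>+ w. ennreal (normal_density (fst v) s (fst w) * normal_density (snd v) s (snd w)) * indicator A w \<partial>lborel)"
    unfolding gauss2_def by (rule emeasure_density) auto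
  also have "\<dots> = (\<integral>\<^sup>+ z. ennreal (s^2) * (ennreal (normal_density (fst v) s (fst (v + s *\<^sub>R z)) * normal_density (snd v) s (snd (v + s *\<^sub>R z))) * indicator A (v + s *\<^sub>R z)) \<partial>lborel)"
    by (rule affine_nn) (use s in auto)
  also have "\<dots> = (\<integral>\<^sup>+ z. ennreal (normal_density 0 1 (fst z) * normal_density 0 1 (snd z)) * indicator ((\<lambda>z. v + s *\<^sub>R z) -` A) z \<partial>lborel)"
    unfolding pw ..
  also have "\<dots> = emeasure (gauss2 0 1) ((\<lambda>z. v + s *\<^sub>R z) -` A)"
    unfolding gauss2_def fst_zero snd_zero by (rule emeasure_density[symmetric]) auto
  also have "\<dots> = emeasure (distr (gauss2 0 1) borel (\<lambda>z. v + s *\<^sub>R z)) A"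
    by (subst emeasure_distr) (auto simp: gauss2_def)
  finally show "emeasure (gauss2 v s) A = emeasure (distr (gauss2 0 1) borel (\<lambda>z. v + s *\<^sub>R z)) A" .
qed

definition Dset :: "real\<times>real \<Rightarrow> real\<times>real \<Rightarrow> (real\<times>real) set" where
  "Dset v w = {x \<in> X_dom. hyp w x \<noteq> hyp v x}"

lemma rho_Dset: "rho (hyp w) (hyp v) = measure (uniform_measure lborel X_dom) (Dset v w)"
  unfolding rho_def Dset_def ..

lemma Dset_sets[measurable]: "Dset v w \<in> sets borel"
proof -
  have f: "(\<lambda>x::real\<times>real. sgn (x \<bullet> w)) \<in> borel_measurable borel" for w
    by (rule measurable_compose[OF _ borel_measurable_sgn, where f="\<lambda>x. x \<bullet> w"]) (intro borel_measurable_continuous_onI continuous_intros)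
  have "Dset v w = X_dom \<inter> {x \<in> space borel. sgn (x \<bullet> w) \<noteq> sgn (x \<bullet> v)}"
    by (auto simp: Dset_def hyp_def)
  also have "\<dots> \<in> sets borel"
    using borel_measurable_neq[OF f f] by simp
  finally show ?thesis .
qed

lemma sgn_lem:
  fixes a b s t :: real
  assumes "0 < s" "s \<le> t" "sgn (a + s*b) \<noteq> sgn a"
  shows "sgn (a + t*b) \<noteq> sgn a"
proof -
  consider "b > 0" | "b < 0" | "b = 0" by linarith
  then show ?thesis
  proof cases
    case 1
    then have "s*b \<le> t*b" "s*b > 0" using assms by (auto intro: mult_right_mono)
    then show ?thesis using assms(3) by (auto simp: sgn_if split: if_splits)
  next
    case 2
    then have "t*b \<le> s*b" "s*b < 0" using assms by (auto intro: mult_right_mono_neg simp: mult_pos_neg)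
    then show ?thesis using assms(3) by (auto simp: sgn_if split: if_splits)
  next
    case 3
    then show ?thesis using assms(3) by simp
  qed
qed

lemma Dset_mono: "0 < s \<Longrightarrow> s \<le> t \<Longrightarrow> Dset v (v + s *\<^sub>R z) \<subseteq> Dset v (v + t *\<^sub>R z)"
  unfolding Dset_def hyp_def
  using sgn_lem[of s t "_ \<bullet> v" "_ \<bullet> z"] by (auto simp: inner_add_right)

lemma R_bounds: "0 \<le> rho (hyp w) (hyp v)" "rho (hyp w) (hyp v) \<le> 1"
proof -
  interpret U: prob_space "uniform_measure lborel X_dom" by (rule U_prob)
  show "0 \<le> rho (hyp w) (hyp v)" "rho (hyp w) (hyp v) \<le> 1"
    unfolding rho_Dset by auto
qed

lemma R_mono: "0 < s \<Longrightarrow> s \<le> t \<Longrightarrow> rho (hyp (v + s *\<^sub>R z)) (hyp v) \<le> rho (hyp (v + t *\<^sub>R z)) (hyp v)"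
proof -
  assume a: "0 < s" "s \<le> t"
  interpret U: prob_space "uniform_measure lborel X_dom" by (rule U_prob)
  show ?thesis unfolding rho_Dset
    by (rule U.finite_measure_mono[OF Dset_mono[OF a]]) simp
qed

lemma ball_pos_U: "ball y r \<subseteq> X_dom \<Longrightarrow> r > 0 \<Longrightarrow> measure (uniform_measure lborel X_dom) (ball y r) > 0"
proof -
  assume a: "ball y r \<subseteq> X_dom" "r > 0"
  have "measure lborel X_dom > 0"
    using content_cball_pos[of 1 "0::real\<times>real"] unfolding X_dom_def by simp
  moreover have "measure lborel (ball y r) > 0" using content_ball_pos[OF a(2), of y] by simp
  moreover have "X_dom \<inter> ball y r = ball y r" using a by auto
  ultimately show ?thesis
    by (subst measure_uniform_measure[OF X_dom_pos]) auto
qed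

lemma R_strict:
  assumes st: "0 < s" "s < t" and d: "fst v * snd z - snd v * fst z \<noteq> 0"
  shows "rho (hyp (v + s *\<^sub>R z)) (hyp v) < rho (hyp (v + t *\<^sub>R z)) (hyp v)"
proof -
  interpret U: prob_space "uniform_measure lborel X_dom" by (rule U_prob)
  define dd where "dd = fst v * snd z - snd v * fst z"
  define b where "b = - 2 / (s + t)"
  define x0 where "x0 = ((snd z - b * snd v) / dd, (- fst z + b * fst v) / dd)"
  have dd0: "dd \<noteq> 0" using d unfolding dd_def .
  have "x0 \<bullet> v = (snd z - b * snd v) / dd * fst v + (- fst z + b * fst v) / dd * snd v"
    unfolding x0_def by (simp add: inner_prod_def)
  also have "\<dots> = ((snd z - b * snd v) * fst v + (- fst z + b * fst v) * snd v) / dd"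
    using dd0 by (simp add: field_simps)
  also have "(snd z - b * snd v) * fst v + (- fst z + b * fst v) * snd v = dd"
    unfolding dd_def by (simp add: algebra_simps)
  finally have x0v: "x0 \<bullet> v = 1" using dd0 by simp
  have "x0 \<bullet> z = (snd z - b * snd v) / dd * fst z + (- fst z + b * fst v) / dd * snd z"
    unfolding x0_def by (simp add: inner_prod_def)
  also have "\<dots> = ((snd z - b * snd v) * fst z + (- fst z + b * fst v) * snd z) / dd"
    using dd0 by (simp add: field_simps)
  also have "(snd z - b * snd v) * fst z + (- fst z + b * fst v) * snd z = b * dd"
    unfolding dd_def by (simp add: algebra_simps)
  finally have x0z: "x0 \<bullet> z = b" using dd0 by simp
  have sb: "1 + s * b > 0" "1 + t * b < 0" using st unfolding b_def by (auto simp: field_simps)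
  define c where "c = 1 / (norm x0 + 1)"
  have n0: "norm x0 \<ge> 0" by simp
  have p: "0 < norm x0 + 1" using n0 by linarith
  have c1: "c > 0" unfolding c_def using p by simp
  have "c * norm x0 = norm x0 / (norm x0 + 1)" unfolding c_def by simp
  also have "\<dots> < 1" using p by (simp add: divide_less_eq)
  finally have c: "c > 0" "c * norm x0 < 1" using c1 by auto
  define y0 where "y0 = c *\<^sub>R x0"
  let ?O = "{y::real\<times>real. norm y < 1 \<and> y \<bullet> v > 0 \<and> y \<bullet> (v + s *\<^sub>R z) > 0 \<and> y \<bullet> (v + t *\<^sub>R z) < 0}"
  have e1: "y0 \<bullet> v = c" "y0 \<bullet> (v + s *\<^sub>R z) = c * (1 + s * b)" "y0 \<bullet> (v + t *\<^sub>R z) = c * (1 + t * b)"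
    "norm y0 = c * norm x0"
    using c x0v x0z unfolding y0_def by (auto simp: inner_add_right algebra_simps)
  have y0O: "y0 \<in> ?O"
    unfolding mem_Collect_eq e1 using c sb by (auto intro: mult_pos_pos mult_pos_neg)
  have "open ?O"
    by (intro open_Collect_conj open_Collect_less continuous_intros)
  then obtain r where r: "r > 0" "ball y0 r \<subseteq> ?O"
    using y0O open_contains_ball by blast
  have sub: "ball y0 r \<subseteq> X_dom"
  proof
    fix x assume "x \<in> ball y0 r"
    then have "norm x < 1" using r by blast
    then show "x \<in> X_dom" by (simp add: X_dom_def)
  qed
  have inT: "ball y0 r \<subseteq> Dset v (v + t *\<^sub>R z)"
    using r sub unfolding Dset_def hyp_def by (auto simp: sgn_if)
  have disj: "ball y0 r \<inter> Dset v (v + s *\<^sub>R z) = {}"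
    using r unfolding Dset_def hyp_def by (auto simp: sgn_if)
  have "measure (uniform_measure lborel X_dom) (Dset v (v + s *\<^sub>R z)) < 
        measure (uniform_measure lborel X_dom) (Dset v (v + s *\<^sub>R z)) + measure (uniform_measure lborel X_dom) (ball y0 r)"
    using ball_pos_U[OF sub r(1)] by simp
  also have "\<dots> = measure (uniform_measure lborel X_dom) (Dset v (v + s *\<^sub>R z) \<union> ball y0 r)"
    using disj by (subst U.finite_measure_Union) auto
  also have "\<dots> \<le> measure (uniform_measure lborel X_dom) (Dset v (v + t *\<^sub>R z))"
    using Dset_mono[of s t v z] st inT by (intro U.finite_measure_mono) auto
  finally show ?thesis unfolding rho_Dset .
qed

lemma AE_hyperplane: "w0 \<noteq> 0 \<Longrightarrow> AE x in lborel. (x::real\<times>real) \<bullet> w0 \<noteq> 0"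
proof -
  assume w0: "w0 \<noteq> 0"
  have "negligible {x::real\<times>real. w0 \<bullet> x = 0}"
    using w0 by (intro negligible_hyperplane) simp
  then have "{x::real\<times>real. w0 \<bullet> x = 0} \<in> null_sets lebesgue"
    unfolding negligible_iff_null_sets .
  then have "AE x in lebesgue. x \<notin> {x::real\<times>real. w0 \<bullet> x = 0}"
    by (rule AE_not_in)
  then have "AE x in lborel. x \<notin> {x::real\<times>real. w0 \<bullet> x = 0}"
    unfolding AE_completion_iff .
  then show ?thesis by (simp add: inner_commute)
qed

lemma R_cont:
  assumes w0: "w0 \<noteq> 0"
  shows "continuous (at w0) (\<lambda>w. rho (hyp w) (hyp v))"
proof (rule continuous_at_sequentiallyI)
  interpret U: prob_space "uniform_measure lborel X_dom" by (rule U_prob)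
  fix u assume u: "u \<longlonglongrightarrow> w0"
  have "(\<lambda>n. integral\<^sup>L (uniform_measure lborel X_dom) (indicator (Dset v (u n)) :: _ \<Rightarrow> real))
        \<longlonglongrightarrow> integral\<^sup>L (uniform_measure lborel X_dom) (indicator (Dset v w0))"
  proof (rule integral_dominated_convergence[where w="\<lambda>_. 1"])
    show "AE x in uniform_measure lborel X_dom. (\<lambda>n. indicator (Dset v (u n)) x :: real) \<longlonglongrightarrow> indicator (Dset v w0) x"
    proof (rule AE_uniform_measureI)
      show "X_dom \<in> sets lborel" by simp
      show "AE x in lborel. x \<in> X_dom \<longrightarrow> (\<lambda>n. indicator (Dset v (u n)) x :: real) \<longlonglongrightarrow> indicator (Dset v w0) x"
        using AE_hyperplane[OF w0]
      proof eventually_elim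
        case (elim x)
        have lim: "(\<lambda>n. x \<bullet> u n) \<longlonglongrightarrow> x \<bullet> w0" using u by (intro tendsto_intros)
        have "eventually (\<lambda>n. sgn (x \<bullet> u n) = sgn (x \<bullet> w0)) sequentially"
        proof (cases "x \<bullet> w0 > 0")
          case True
          show ?thesis by (rule eventually_mono[OF order_tendstoD(1)[OF lim True]]) (simp add: True)
        next
          case False
          then have neg: "x \<bullet> w0 < 0" using elim by linarith
          show ?thesis by (rule eventually_mono[OF order_tendstoD(2)[OF lim neg]]) (simp add: neg)
        qed
        then have "eventually (\<lambda>n. indicator (Dset v (u n)) x = (indicator (Dset v w0) x :: real)) sequentially"
          by eventually_elim (simp add: Dset_def hyp_def indicator_def)
        then show ?case by (intro impI tendsto_eventually) (simp add: eventually_mono)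
      qed
    qed
  qed (auto simp: indicator_def)
  then show "(\<lambda>n. rho (hyp (u n)) (hyp v)) \<longlonglongrightarrow> rho (hyp w0) (hyp v)"
    unfolding rho_Dset by simp
qed

lemma P_AE: "(AE z in lborel. P z) \<Longrightarrow> (AE z in gauss2 0 1. P z)"
  unfolding gauss2_def by (subst AE_density) (auto elim: AE_mp)

lemma P_sets[simp]: "sets (gauss2 v s) = sets borel"
  by (simp add: gauss2_def)

theorem proposition2:
  fixes v :: "real \<times> real"
  assumes "v \<noteq> 0"
  shows "continuous_on {0<..} (exp_disagree v) \<and> strict_mono_on {0<..} (exp_disagree v)"
proof -
  interpret P: prob_space "gauss2 0 1" by (rule P_prob)
  define R where "R w = rho (hyp w) (hyp v)" for w
  define F where "F s = (\<integral>z. R (v + s *\<^sub>R z) \<partial>gauss2 0 1)" for s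
  have Rm[measurable]: "R \<in> borel_measurable borel" unfolding R_def by simp
  have Tm: "(\<lambda>z. v + s *\<^sub>R z) \<in> measurable (gauss2 0 1) borel" for s
  proof -
    have "(\<lambda>z::real\<times>real. v + s *\<^sub>R z) \<in> borel_measurable borel"
      by (intro borel_measurable_continuous_onI continuous_intros)
    then show ?thesis by (simp add: measurable_cong_sets[OF P_sets refl])
  qed
  have RTm: "(\<lambda>z. R (v + s *\<^sub>R z)) \<in> borel_measurable (gauss2 0 1)" for s
    using measurable_compose[OF Tm Rm] by simp
  have Rb: "norm (R w) \<le> 1" for w using R_bounds[of w v] unfolding R_def by simp
  have int: "integrable (gauss2 0 1) (\<lambda>z. R (v + s *\<^sub>R z))" for s
    by (rule P.integrable_const_bound[where B=1]) (use Rb RTm in auto)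
  have EF: "exp_disagree v s = F s" if "s > 0" for s
    unfolding exp_disagree_def F_def gauss2_affine[OF that] R_def[symmetric]
    by (rule integral_distr[OF Tm Rm])
  have cont: "isCont F s0" if s0: "s0 > 0" for s0
  proof (rule continuous_at_sequentiallyI)
    fix u assume u: "u \<longlonglongrightarrow> s0"
    show "(\<lambda>n. F (u n)) \<longlonglongrightarrow> F s0"
      unfolding F_def
    proof (rule integral_dominated_convergence[where w="\<lambda>_. 1"])
      show "AE z in gauss2 0 1. (\<lambda>n. R (v + u n *\<^sub>R z)) \<longlonglongrightarrow> R (v + s0 *\<^sub>R z)"
      proof (rule P_AE)
        show "AE z in lborel. (\<lambda>n. R (v + u n *\<^sub>R z)) \<longlonglongrightarrow> R (v + s0 *\<^sub>R z)"
          using AE_lborel_singleton[of "- (1 / s0) *\<^sub>R v"]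
        proof eventually_elim
          case (elim z)
          have "v + s0 *\<^sub>R z \<noteq> 0"
          proof
            assume "v + s0 *\<^sub>R z = 0"
            then have "s0 *\<^sub>R z = - v" by (simp add: eq_neg_iff_add_eq_0 add.commute)
            then have "(1 / s0) *\<^sub>R (s0 *\<^sub>R z) = (1 / s0) *\<^sub>R (- v)" by simp
            then have "z = - (1 / s0) *\<^sub>R v" using s0 by simp
            then show False using elim by simp
          qed
          from R_cont[OF this, of v] have "isCont R (v + s0 *\<^sub>R z)" unfolding R_def .
          moreover have "(\<lambda>n. v + u n *\<^sub>R z) \<longlonglongrightarrow> v + s0 *\<^sub>R z" using u by (intro tendsto_intros)
          ultimately show ?case by (rule isCont_tendsto_compose)
        qed
      qed
    qed (use RTm Rb in auto)
  qed
  have mono: "F r \<le> F s" if "0 < r" "r \<le> s" for r s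
    unfolding F_def R_def
    by (rule integral_mono[OF int[unfolded R_def] int[unfolded R_def]]) (rule R_mono[OF that])
  have strict: "F r < F s" if rs: "0 < r" "r < s" for r s
  proof (rule ccontr)
    assume "\<not> F r < F s"
    with mono[of r s] rs have eq: "F s - F r = 0" by simp
    have "F s - F r = (\<integral>z. R (v + s *\<^sub>R z) - R (v + r *\<^sub>R z) \<partial>gauss2 0 1)"
      unfolding F_def by (rule Bochner_Integration.integral_diff[symmetric, OF int int])
    with eq have "(\<integral>z. R (v + s *\<^sub>R z) - R (v + r *\<^sub>R z) \<partial>gauss2 0 1) = 0" by simp
    moreover have nn: "AE z in gauss2 0 1. 0 \<le> R (v + s *\<^sub>R z) - R (v + r *\<^sub>R z)"
      using R_mono[of r s v] rs unfolding R_def by simp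
    ultimately have "AE z in gauss2 0 1. R (v + s *\<^sub>R z) - R (v + r *\<^sub>R z) = 0"
      using integral_nonneg_eq_0_iff_AE[OF Bochner_Integration.integrable_diff[OF int int] nn] by simp
    then have "AE z in lborel. 0 < normal_density 0 1 (fst z) * normal_density 0 1 (snd z) \<longrightarrow> R (v + s *\<^sub>R z) - R (v + r *\<^sub>R z) = 0"
      unfolding gauss2_def fst_zero snd_zero by (subst (asm) AE_density) auto
    then have ae: "AE z in lborel. R (v + s *\<^sub>R z) - R (v + r *\<^sub>R z) = 0"
      by eventually_elim (simp add: normal_density_pos)
    let ?H = "{z::real\<times>real. fst v * snd z - snd v * fst z > 0}"
    have "AE z in lborel. z \<notin> ?H"
      using ae
    proof eventually_elim
      case (elim z)
      show ?case
      proof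
        assume "z \<in> ?H"
        then have "R (v + r *\<^sub>R z) < R (v + s *\<^sub>R z)"
          unfolding R_def by (intro R_strict rs) simp
        then show False using elim by simp
      qed
    qed
    moreover have Hs: "?H \<in> sets lborel"
      by (simp add: open_Collect_less continuous_intros borel_open)
    ultimately have Hnull: "?H \<in> null_sets lborel"
      using AE_iff_null_sets by blast
    define vp where "vp = (- snd v, fst v)"
    have "fst v * snd vp - snd v * fst vp = (fst v)^2 + (snd v)^2"
      unfolding vp_def by (simp add: power2_eq_square)
    also have "\<dots> > 0" using assms by (simp add: prod_eq_iff sum_power2_gt_zero_iff zero_prod_def)
    finally have "vp \<in> ?H" by simp
    moreover have "open ?H" by (intro open_Collect_less continuous_intros)
    ultimately obtain e where e: "e > 0" "ball vp e \<subseteq> ?H"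
      using open_contains_ball by blast
    have "emeasure lborel (ball vp e) \<le> emeasure lborel ?H"
      using e Hs by (intro emeasure_mono) auto
    also have "\<dots> = 0" using Hnull by auto
    finally have "emeasure lborel (ball vp e) = 0" by simp
    moreover have "measure lborel (ball vp e) > 0" using content_ball_pos[OF e(1)] by simp
    ultimately show False by (simp add: measure_def)
  qed
  show ?thesis
  proof
    have "continuous_on {0<..} F"
      using cont by (intro continuous_at_imp_continuous_on) auto
    then show "continuous_on {0<..} (exp_disagree v)"
      by (rule continuous_on_cong[THEN iffD1, rotated 2]) (auto simp: EF)
    show "strict_mono_on {0<..} (exp_disagree v)"
      by (rule strict_mono_onI) (simp add: EF strict)
  qed
qed

end
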